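(* Let $w$ be a bounded positive function on $\mathbb{T}$ such that $\log w$ is integrable, and fix $0<\delta<1$. If there is $\varepsilon\in(0,\delta)$ such that $\operatorname{dist}\big(L_w^+(\delta),L_w^-(\varepsilon)\big)>0$, then $w$ is an apical Helson--Szegő weight at level $\delta$.
   Context: $\mathbb{T}$ is the unit circle with normalized Lebesgue measure. For a bounded $\psi$ and $0\le\delta\le1$, $L_\psi^+(\delta)=\{e^{i\theta}\in\mathbb{T}: |\psi(e^{i\theta})|\ge\|\psi\|_\infty\delta\}$ and $L_\psi^-(\delta)=\{e^{i\theta}\in\mathbb{T}: |\psi(e^{i\theta})|<\|\psi\|_\infty\delta\}$; $\operatorname{dist}$ is the distance between subsets of $\mathbb{T}$. For real $v\in L^1(\mathbb{T})$, $\tilde v$ denotes its conjugate function. A bounded positive function $w$ on $\mathbb{T}$ is an apical Helson--Szegő weight at level $\delta$ if $w=\exp(u+v)$ where $u\in L^\infty(\mathbb{T})$ and $v\in L^1(\mathbb{T})$ are real-valued and $\operatorname{ess\,sup}_{L_w^+(\delta)}|\tilde v|<\pi/2$. *)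

theory Defs
  imports "HOL-Analysis.Analysis"
begin

text \<open>Points of the unit circle are parametrised as cis theta, theta in [-pi, pi].
  Normalised Lebesgue measure on the circle, pulled back to the parameter theta.\<close>
definition circle_measure :: "real measure" where
  "circle_measure = density (restrict_space lborel {-pi..pi}) (\<lambda>_. ennreal (1 / (2 * pi)))"

definition ess_norm_inf :: "(complex \<Rightarrow> real) \<Rightarrow> real" where
  "ess_norm_inf w = Inf {B. AE \<theta> in circle_measure. \<bar>w (cis \<theta>)\<bar> \<le> B}"

definition Lplus :: "(complex \<Rightarrow> real) \<Rightarrow> real \<Rightarrow> complex set" where
  "Lplus w \<delta> = {z \<in> sphere 0 1. \<bar>w z\<bar> \<ge> ess_norm_inf w * \<delta>}"

definition Lminus :: "(complex \<Rightarrow> real) \<Rightarrow> real \<Rightarrow> complex set" where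
  "Lminus w \<delta> = {z \<in> sphere 0 1. \<bar>w z\<bar> < ess_norm_inf w * \<delta>}"

definition conj_fun :: "(complex \<Rightarrow> real) \<Rightarrow> real \<Rightarrow> real" where
  "conj_fun v \<theta> = Lim (at_right 0) (\<lambda>e. (1 / (2 * pi)) *
      (LINT t:{t. e \<le> \<bar>t\<bar> \<and> \<bar>t\<bar> \<le> pi}|lborel. v (cis (\<theta> - t)) * cot (t / 2)))"

definition apical_HS_weight :: "(complex \<Rightarrow> real) \<Rightarrow> real \<Rightarrow> bool" where
  "apical_HS_weight w \<delta> \<longleftrightarrow>
     bounded (w ` sphere 0 1) \<and> (\<forall>z \<in> sphere 0 1. w z > 0) \<and>
     (\<exists>u v :: complex \<Rightarrow> real.
        (\<lambda>\<theta>. u (cis \<theta>)) \<in> borel_measurable circle_measure \<and>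
        (\<exists>B. AE \<theta> in circle_measure. \<bar>u (cis \<theta>)\<bar> \<le> B) \<and>
        integrable circle_measure (\<lambda>\<theta>. v (cis \<theta>)) \<and>
        (AE \<theta> in circle_measure. w (cis \<theta>) = exp (u (cis \<theta>) + v (cis \<theta>))) \<and>
        (\<exists>M < pi / 2. AE \<theta> in circle_measure.
            cis \<theta> \<in> Lplus w \<delta> \<longrightarrow> \<bar>conj_fun v \<theta>\<bar> \<le> M))"

end

theory Submission
  imports Defs
begin

lemma sets_circle: "sets circle_measure = sets (restrict_space lborel {-pi..pi})"
  unfolding circle_measure_def by simp

lemma space_circle: "space circle_measure = {-pi..pi}"
  unfolding circle_measure_def by simp

lemma circle_nn:
  assumes [measurable]: "h \<in> borel_measurable borel"
  shows "(\<integral>\<^sup>+x. h x \<partial>circle_measure) = ennreal (1/(2*pi)) * (\<integral>\<^sup>+x. h x * indicator {-pi..pi} x \<partial>lborel)"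
proof -
  have "(\<integral>\<^sup>+x. h x \<partial>circle_measure) = (\<integral>\<^sup>+x. ennreal (1/(2*pi)) * h x \<partial>restrict_space lborel {-pi..pi})"
    unfolding circle_measure_def
    by (subst nn_integral_density) (auto intro: measurable_restrict_space1)
  also have "\<dots> = (\<integral>\<^sup>+x. ennreal (1/(2*pi)) * (h x * indicator {-pi..pi} x) \<partial>lborel)"
    by (subst nn_integral_restrict_space) (auto simp: mult.assoc)
  also have "\<dots> = ennreal (1/(2*pi)) * (\<integral>\<^sup>+x. h x * indicator {-pi..pi} x \<partial>lborel)"
    by (rule nn_integral_cmult) simp
  finally show ?thesis .
qed

definition red :: "real \<Rightarrow> real" where
  "red s = s - 2*pi*real_of_int \<lfloor>(s+pi)/(2*pi)\<rfloor>"

lemma red_range: "red s \<in> {-pi..pi}"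
proof -
  let ?k = "real_of_int \<lfloor>(s+pi)/(2*pi)\<rfloor>"
  have a: "?k \<le> (s+pi)/(2*pi)" "(s+pi)/(2*pi) < ?k + 1" by linarith+
  have "?k * (2*pi) \<le> s + pi" using a(1) pi_gt_zero by (metis mult_pos_pos pos_le_divide_eq zero_less_numeral)
  moreover have "s + pi < (?k + 1) * (2*pi)" using a(2) pi_gt_zero by (metis mult_pos_pos pos_divide_less_eq zero_less_numeral)
  ultimately have "2*pi*?k \<le> s + pi" "s + pi < 2*pi*?k + 2*pi" by (auto simp: algebra_simps)
  then show ?thesis unfolding red_def by auto
qed

lemma cis_red: "cis (red s) = cis s"
proof -
  have "cis (red s) = cis s * cis (- (2*pi*real_of_int \<lfloor>(s+pi)/(2*pi)\<rfloor>))"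
    unfolding red_def by (simp add: cis_mult)
  also have "cis (- (2*pi*real_of_int \<lfloor>(s+pi)/(2*pi)\<rfloor>)) = 1"
    using cis_multiple_2pi[of "- real_of_int \<lfloor>(s+pi)/(2*pi)\<rfloor>"] by simp
  finally show ?thesis by simp
qed

lemma red_meas[measurable]: "red \<in> borel_measurable borel"
  unfolding red_def by measurable

lemma circ_meas_lborel:
  assumes "(\<lambda>s. f (cis s)) \<in> borel_measurable circle_measure"
  shows "(\<lambda>s. f (cis s)) \<in> borel_measurable borel"
proof -
  have m: "(\<lambda>s. f (cis s)) \<in> borel_measurable (restrict_space lborel {-pi..pi})"
    using assms measurable_cong_sets[OF sets_circle refl] by blast
  have "red \<in> measurable lborel (restrict_space lborel {-pi..pi})"
    by (rule measurable_restrict_space2) (use red_range in auto)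
  from measurable_compose[OF this m] have "(\<lambda>s. f (cis (red s))) \<in> borel_measurable lborel" .
  then show ?thesis by (simp add: cis_red)
qed

lemma cis_dist: "dist (cis a) (cis (a - t)) = 2 * \<bar>sin (t/2)\<bar>"
proof -
  have "cis a - cis (a - t) = cis a * (1 - cis (-t))"
    by (simp add: algebra_simps cis_mult)
  then have "dist (cis a) (cis (a - t)) = cmod (1 - cis (-t))"
    by (simp add: dist_norm norm_mult)
  also have "\<dots> = sqrt ((1 - cos t)^2 + (sin t)^2)"
    by (simp add: cmod_def)
  also have "(1 - cos t)^2 + (sin t)^2 = (2 * \<bar>sin (t/2)\<bar>)^2"
  proof -
    have c: "cos t = 1 - 2 * (sin (t/2))^2" using cos_double_sin[of "t/2"] by simp
    have "(1 - cos t)^2 + (sin t)^2 = 2 - 2 * cos t"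
      using sin_cos_squared_add[of t] by (simp add: power2_eq_square algebra_simps)
    also have "\<dots> = (2 * \<bar>sin (t/2)\<bar>)^2" by (simp add: c power2_eq_square power_mult_distrib)
    finally show ?thesis .
  qed
  also have "sqrt ((2 * \<bar>sin (t/2)\<bar>)^2) = 2 * \<bar>sin (t/2)\<bar>" by (rule trans[OF real_sqrt_abs]) simp
  finally show ?thesis .
qed

lemma nn_shift:
  fixes G :: "real \<Rightarrow> ennreal"
  assumes [measurable]: "G \<in> borel_measurable borel" and per: "\<And>s. G (s + 2*pi) = G s"
  shows "(\<integral>\<^sup>+s. G s * indicator {a + 2*pi..b + 2*pi} s \<partial>lborel) = (\<integral>\<^sup>+s. G s * indicator {a..b} s \<partial>lborel)"
proof -
  have "(\<integral>\<^sup>+s. G s * indicator {a + 2*pi..b + 2*pi} s \<partial>lborel)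
      = ennreal \<bar>1\<bar> * (\<integral>\<^sup>+s. G (2*pi + 1 * s) * indicator {a + 2*pi..b + 2*pi} (2*pi + 1 * s) \<partial>lborel)"
    by (rule nn_integral_real_affine) auto
  also have "\<dots> = (\<integral>\<^sup>+s. G (2*pi + 1 * s) * indicator {a + 2*pi..b + 2*pi} (2*pi + 1 * s) \<partial>lborel)"
    by simp
  also have "\<dots> = (\<integral>\<^sup>+s. G s * indicator {a..b} s \<partial>lborel)"
    by (intro nn_integral_cong) (auto simp: per add.commute indicator_def)
  finally show ?thesis .
qed

lemma three_ennreal: "(x::ennreal) + x + x = 3 * x"
proof -
  have "(3::ennreal) = 1 + 1 + 1" by simp
  then have "3 * x = (1 + 1 + 1) * x" by simp
  also have "\<dots> = x + x + x" by (simp only: distrib_right mult_1)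
  finally show ?thesis by simp
qed

lemma nn_transl:
  fixes G :: "real \<Rightarrow> ennreal"
  assumes [measurable]: "G \<in> borel_measurable borel" and per: "\<And>s. G (s + 2*pi) = G s"
    and th: "\<theta> \<in> {-pi..pi}"
  shows "(\<integral>\<^sup>+t. G (\<theta> - t) * indicator {-pi..pi} t \<partial>lborel) \<le> 3 * (\<integral>\<^sup>+s. G s * indicator {-pi..pi} s \<partial>lborel)"
proof -
  have "(\<integral>\<^sup>+t. G (\<theta> - t) * indicator {-pi..pi} t \<partial>lborel)
      = ennreal \<bar>-1\<bar> * (\<integral>\<^sup>+s. G (\<theta> - (\<theta> + (-1) * s)) * indicator {-pi..pi} (\<theta> + (-1) * s) \<partial>lborel)"
    by (rule nn_integral_real_affine) auto
  also have "\<dots> = (\<integral>\<^sup>+s. G s * indicator {-pi..pi} (\<theta> - s) \<partial>lborel)"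
    by simp
  also have "\<dots> \<le> (\<integral>\<^sup>+s. G s * indicator {-pi - 2*pi..pi - 2*pi} s + G s * indicator {-pi..pi} s
        + G s * indicator {-pi + 2*pi..pi + 2*pi} s \<partial>lborel)"
  proof (intro nn_integral_mono)
    fix s
    show "G s * indicator {-pi..pi} (\<theta> - s) \<le> G s * indicator {-pi - 2*pi..pi - 2*pi} s + G s * indicator {-pi..pi} s
        + G s * indicator {-pi + 2*pi..pi + 2*pi} s"
    proof (cases "\<theta> - s \<in> {-pi..pi}")
      case True
      then have "s \<in> {-pi - 2*pi..pi - 2*pi} \<or> s \<in> {-pi..pi} \<or> s \<in> {-pi + 2*pi..pi + 2*pi}"
        using th by auto
      then show ?thesis using True by (auto simp: indicator_def)
    next
      case False then show ?thesis by simp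
    qed
  qed
  also have "\<dots> = (\<integral>\<^sup>+s. G s * indicator {-pi - 2*pi..pi - 2*pi} s \<partial>lborel) + (\<integral>\<^sup>+s. G s * indicator {-pi..pi} s \<partial>lborel)
        + (\<integral>\<^sup>+s. G s * indicator {-pi + 2*pi..pi + 2*pi} s \<partial>lborel)"
    by (simp add: nn_integral_add)
  also have e1: "(\<integral>\<^sup>+s. G s * indicator {-pi + 2*pi..pi + 2*pi} s \<partial>lborel) = (\<integral>\<^sup>+s. G s * indicator {-pi..pi} s \<partial>lborel)"
    by (rule nn_shift[OF assms(1) per])
  also have "(\<integral>\<^sup>+s. G s * indicator {-pi - 2*pi..pi - 2*pi} s \<partial>lborel) = (\<integral>\<^sup>+s. G s * indicator {-pi..pi} s \<partial>lborel)"
    using nn_shift[OF assms(1) per, of "-pi - 2*pi" "pi - 2*pi"] by simp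
  finally show ?thesis by (simp only: three_ennreal)
qed

theorem lemma1:
  fixes w :: "complex \<Rightarrow> real" and \<delta> :: real
  assumes "bounded (w ` sphere 0 1)"
    and "\<forall>z \<in> sphere 0 1. w z > 0"
    and "integrable circle_measure (\<lambda>\<theta>. ln (w (cis \<theta>)))"
    and "0 < \<delta>" and "\<delta> < 1"
    and "\<exists>\<epsilon>. 0 < \<epsilon> \<and> \<epsilon> < \<delta> \<and> setdist (Lplus w \<delta>) (Lminus w \<epsilon>) > 0"
  shows "apical_HS_weight w \<delta>"
proof -
  note bnd = assms(1) and pos = assms(2) and intL = assms(3)
  obtain \<epsilon> where e: "0 < \<epsilon>" "\<epsilon> < \<delta>" and Dpos: "setdist (Lplus w \<delta>) (Lminus w \<epsilon>) > 0"
    using assms(6) by blast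
  define D where "D = setdist (Lplus w \<delta>) (Lminus w \<epsilon>)"
  define N where "N = ess_norm_inf w"
  have D0: "D > 0" using Dpos D_def by simp
  have posc: "w (cis s) > 0" for s using pos by simp
  have "Lminus w \<epsilon> \<noteq> {}"
  proof
    assume "Lminus w \<epsilon> = {}"
    then show False using Dpos by simp
  qed
  then obtain z0 where "z0 \<in> Lminus w \<epsilon>" by blast
  then have "\<bar>w z0\<bar> < N * \<epsilon>" unfolding Lminus_def N_def by auto
  then have Ne: "N * \<epsilon> > 0" by linarith
  define L where "L = (\<lambda>s. ln (w (cis s)))"
  have Lmc: "L \<in> borel_measurable circle_measure"
    using borel_measurable_integrable[OF intL] unfolding L_def .
  have Lm[measurable]: "L \<in> borel_measurable borel"
    using circ_meas_lborel[of "\<lambda>z. ln (w z)"] Lmc unfolding L_def by simp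
  have "(\<integral>\<^sup>+x. ennreal (norm (L x)) \<partial>circle_measure) < \<infinity>"
    using intL unfolding integrable_iff_bounded L_def by simp
  then have "ennreal (1/(2*pi)) * (\<integral>\<^sup>+x. ennreal \<bar>L x\<bar> * indicator {-pi..pi} x \<partial>lborel) < \<infinity>"
    by (subst (asm) circle_nn) auto
  then have Lfin: "(\<integral>\<^sup>+x. ennreal \<bar>L x\<bar> * indicator {-pi..pi} x \<partial>lborel) < \<infinity>"
    by (auto simp: ennreal_mult_less_top)
  define U where "U = (\<lambda>(n::nat) s. ennreal \<bar>min (L s + real n) 0\<bar> * indicator {-pi..pi} s)"
  have conv: "(\<lambda>n. \<integral>\<^sup>+s. U n s \<partial>lborel) \<longlonglongrightarrow> (\<integral>\<^sup>+s. 0 \<partial>(lborel::real measure))"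
  proof (rule nn_integral_dominated_convergence[where u=U and u'="\<lambda>s. 0" and w="\<lambda>x. ennreal \<bar>L x\<bar> * indicator {-pi..pi} x"])
    show "\<And>i. U i \<in> borel_measurable lborel" unfolding U_def by measurable
    show "AE x in lborel. U j x \<le> ennreal \<bar>L x\<bar> * indicator {-pi..pi} x" for j
    proof (intro AE_I2)
      fix x
      have "\<bar>min (L x + real j) 0\<bar> \<le> \<bar>L x\<bar>" by (cases "L x + real j < 0") auto
      then show "U j x \<le> ennreal \<bar>L x\<bar> * indicator {-pi..pi} x"
        unfolding U_def by (intro mult_right_mono ennreal_leI) auto
    qed
    show "AE x in lborel. (\<lambda>i. U i x) \<longlonglongrightarrow> 0"
    proof (intro AE_I2 tendsto_eventually)
      fix x
      obtain n0 :: nat where "real n0 \<ge> - L x" using real_arch_simple by blast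
      then show "\<forall>\<^sub>F i in sequentially. U i x = 0"
        unfolding U_def eventually_sequentially by (intro exI[of _ n0]) auto
    qed
  qed (use Lfin in auto)
  define \<eta> where "\<eta> = pi^2 * D / 12"
  have eta0: "\<eta> > 0" using D0 unfolding \<eta>_def by simp
  have "eventually (\<lambda>n. (\<integral>\<^sup>+s. U n s \<partial>lborel) < ennreal \<eta>) sequentially"
    using order_tendstoD(2)[OF conv] eta0 by simp
  then obtain n0 where n0: "\<And>n. n \<ge> n0 \<Longrightarrow> (\<integral>\<^sup>+s. U n s \<partial>lborel) < ennreal \<eta>"
    unfolding eventually_sequentially by blast
  define n where "n = max n0 (nat \<lceil>- ln (N*\<epsilon>)\<rceil>)"
  have An: "(\<integral>\<^sup>+s. U n s \<partial>lborel) < ennreal \<eta>" using n0 n_def by simp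
  have "real n \<ge> - ln (N*\<epsilon>)" unfolding n_def by linarith
  then have "- real n \<le> ln (N*\<epsilon>)" by linarith
  then have "exp (- real n) \<le> exp (ln (N*\<epsilon>))" by simp
  then have expn: "exp (- real n) \<le> N * \<epsilon>" using Ne by simp
  define v where "v = (\<lambda>z. min (ln (w z) + real n) 0)"
  define u where "u = (\<lambda>z. max (ln (w z)) (- real n))"
  have vL: "v (cis s) = min (L s + real n) 0" for s unfolding v_def L_def by simp
  have uL: "u (cis s) = max (L s) (- real n)" for s unfolding u_def L_def by simp
  have Afin: "(\<integral>\<^sup>+s. U n s \<partial>lborel) \<noteq> top" using An by (metis ennreal_less_top less_trans order.strict_implies_not_eq)
  define a where "a = enn2real (\<integral>\<^sup>+s. U n s \<partial>lborel)"
  have Aeq: "(\<integral>\<^sup>+s. U n s \<partial>lborel) = ennreal a" unfolding a_def using Afin by (simp add: ennreal_enn2real_if)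
  have a0: "a \<ge> 0" unfolding a_def by simp
  have a_lt: "a < \<eta>" using An Aeq a0 by (simp add: ennreal_less_iff)
  define M where "M = 3 * a / (pi * D)"
  have M_lt: "M < pi / 2"
  proof -
    have "3 * a < 3 * \<eta>" using a_lt by simp
    also have "3 * \<eta> = pi * D * (pi / 4)" unfolding \<eta>_def by (simp add: power2_eq_square)
    finally have "3 * a / (pi * D) < pi / 4" using D0 by (simp add: divide_less_eq mult.commute)
    then show ?thesis unfolding M_def using pi_gt_zero by linarith
  qed
  have Gper: "ennreal \<bar>v (cis (s + 2*pi))\<bar> = ennreal \<bar>v (cis s)\<bar>" for s
  proof -
    have "cis (s + 2*pi) = cis s * cis (2*pi)" by (simp only: cis_mult)
    then show ?thesis by simp
  qed
  have Gm[measurable]: "(\<lambda>s. ennreal \<bar>v (cis s)\<bar>) \<in> borel_measurable borel"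
    unfolding vL by measurable
  have conjb: "\<bar>conj_fun v \<theta>\<bar> \<le> M" if th: "\<theta> \<in> {-pi..pi}" and Lp: "cis \<theta> \<in> Lplus w \<delta>" for \<theta>
  proof -
    have key: "D \<le> 2 * \<bar>sin (t/2)\<bar>" if nz: "v (cis (\<theta> - t)) \<noteq> 0" for t
    proof -
      have "L (\<theta> - t) < - real n" using nz unfolding vL by (auto simp: min_def split: if_splits)
      then have "exp (L (\<theta> - t)) < exp (- real n)" by simp
      then have "w (cis (\<theta> - t)) < exp (- real n)" unfolding L_def using posc by simp
      then have "cis (\<theta> - t) \<in> Lminus w \<epsilon>"
        unfolding Lminus_def using expn posc[of "\<theta> - t"] N_def by auto
      from setdist_le_dist[OF Lp this] show ?thesis unfolding D_def cis_dist .
    qed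
    have key2: "D \<le> \<bar>t\<bar>" if nz: "v (cis (\<theta> - t)) \<noteq> 0" for t
      using key[OF nz] abs_sin_x_le_abs_x[of "t/2"] by simp
    have cotb: "\<bar>cot (t/2)\<bar> \<le> 2 / D" if nz: "v (cis (\<theta> - t)) \<noteq> 0" for t
    proof -
      have s: "D / 2 \<le> \<bar>sin (t/2)\<bar>" using key[OF nz] by simp
      then have sp: "\<bar>sin (t/2)\<bar> > 0" using D0 by linarith
      have "\<bar>cot (t/2)\<bar> = \<bar>cos (t/2)\<bar> / \<bar>sin (t/2)\<bar>" by (simp add: cot_def abs_divide)
      also have "\<dots> \<le> 1 / \<bar>sin (t/2)\<bar>" using sp by (intro divide_right_mono) auto
      also have "\<dots> \<le> 1 / (D/2)" using s D0 by (intro divide_left_mono) auto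
      finally show ?thesis by simp
    qed
    define f where "f = (\<lambda>t. v (cis (\<theta> - t)) * cot (t/2))"
    define S where "S = (\<lambda>e. {t::real. e \<le> \<bar>t\<bar> \<and> \<bar>t\<bar> \<le> pi})"
    have Feq: "(LINT t:S e|lborel. f t) = (LINT t:S D|lborel. f t)" if e: "0 < e" "e \<le> D" for e
      unfolding set_lebesgue_integral_def
    proof (intro Bochner_Integration.integral_cong refl)
      fix t
      show "indicator (S e) t *\<^sub>R f t = indicator (S D) t *\<^sub>R f t"
      proof (cases "v (cis (\<theta> - t)) = 0")
        case True then show ?thesis unfolding f_def by simp
      next
        case False
        then have "D \<le> \<bar>t\<bar>" by (rule key2)
        then have "t \<in> S e \<longleftrightarrow> t \<in> S D" unfolding S_def using e by auto
        then show ?thesis by (simp add: indicator_def)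
      qed
    qed
    have cf: "conj_fun v \<theta> = (1/(2*pi)) * (LINT t:S D|lborel. f t)"
      unfolding conj_fun_def
    proof (rule tendsto_Lim)
      show "\<not> trivial_limit (at_right (0::real))" by simp
      show "((\<lambda>e. 1 / (2 * pi) * (LINT t:{t. e \<le> \<bar>t\<bar> \<and> \<bar>t\<bar> \<le> pi}|lborel. v (cis (\<theta> - t)) * cot (t / 2)))
          \<longlongrightarrow> 1 / (2 * pi) * (LINT t:S D|lborel. f t)) (at_right 0)"
      proof (rule tendsto_eventually)
        show "\<forall>\<^sub>F e in at_right 0. 1 / (2 * pi) * (LINT t:{t. e \<le> \<bar>t\<bar> \<and> \<bar>t\<bar> \<le> pi}|lborel. v (cis (\<theta> - t)) * cot (t / 2))
             = 1 / (2 * pi) * (LINT t:S D|lborel. f t)"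
          unfolding eventually_at_right_field
        proof (intro exI[of _ D] conjI allI impI)
          show "D > 0" by (rule D0)
          fix y :: real assume y: "y > 0" "y < D"
          have "(LINT t:{t. y \<le> \<bar>t\<bar> \<and> \<bar>t\<bar> \<le> pi}|lborel. v (cis (\<theta> - t)) * cot (t / 2)) = (LINT t:S y|lborel. f t)"
            unfolding S_def f_def ..
          also have "\<dots> = (LINT t:S D|lborel. f t)" using Feq[of y] y by simp
          finally show "1 / (2 * pi) * (LINT t:{t. y \<le> \<bar>t\<bar> \<and> \<bar>t\<bar> \<le> pi}|lborel. v (cis (\<theta> - t)) * cot (t / 2))
             = 1 / (2 * pi) * (LINT t:S D|lborel. f t)" by simp
        qed
      qed
    qed
    define g where "g = (\<lambda>t. indicator (S D) t *\<^sub>R f t)"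
    have gm: "g \<in> borel_measurable lborel"
      unfolding g_def f_def S_def vL cot_def by measurable
    have "\<bar>LINT t:S D|lborel. f t\<bar> = \<bar>integral\<^sup>L lborel g\<bar>"
      unfolding set_lebesgue_integral_def g_def ..
    also have "\<dots> \<le> integral\<^sup>L lborel (\<lambda>t. \<bar>g t\<bar>)"
      using integral_norm_bound[of lborel g] by simp
    also have "\<dots> = enn2real (\<integral>\<^sup>+t. ennreal \<bar>g t\<bar> \<partial>lborel)"
      by (rule integral_eq_nn_integral) (use gm in auto)
    also have "\<dots> \<le> 6 * a / D"
    proof -
      have "(\<integral>\<^sup>+t. ennreal \<bar>g t\<bar> \<partial>lborel)
          \<le> (\<integral>\<^sup>+t. ennreal (2/D) * (ennreal \<bar>v (cis (\<theta> - t))\<bar> * indicator {-pi..pi} t) \<partial>lborel)"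
      proof (intro nn_integral_mono)
        fix t
        show "ennreal \<bar>g t\<bar> \<le> ennreal (2/D) * (ennreal \<bar>v (cis (\<theta> - t))\<bar> * indicator {-pi..pi} t)"
        proof (cases "t \<in> S D \<and> v (cis (\<theta> - t)) \<noteq> 0")
          case True
          then have tp: "t \<in> {-pi..pi}" unfolding S_def by auto
          have "\<bar>g t\<bar> = \<bar>v (cis (\<theta> - t))\<bar> * \<bar>cot (t/2)\<bar>"
            using True unfolding g_def f_def by (simp add: abs_mult)
          also have "\<dots> \<le> \<bar>v (cis (\<theta> - t))\<bar> * (2/D)"
            using cotb True by (intro mult_left_mono) auto
          finally have "ennreal \<bar>g t\<bar> \<le> ennreal (2/D * \<bar>v (cis (\<theta> - t))\<bar>)"
            by (intro ennreal_leI) (simp add: mult.commute)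
          also have "\<dots> = ennreal (2/D) * (ennreal \<bar>v (cis (\<theta> - t))\<bar> * indicator {-pi..pi} t)"
            using tp D0 by (simp add: ennreal_mult[symmetric])
          finally show ?thesis .
        next
          case False
          then have "g t = 0" unfolding g_def f_def by (auto simp: indicator_def)
          then show ?thesis by simp
        qed
      qed
      also have "\<dots> = ennreal (2/D) * (\<integral>\<^sup>+t. ennreal \<bar>v (cis (\<theta> - t))\<bar> * indicator {-pi..pi} t \<partial>lborel)"
        by (rule nn_integral_cmult) (unfold vL, measurable)
      also have "\<dots> \<le> ennreal (2/D) * (3 * (\<integral>\<^sup>+s. ennreal \<bar>v (cis s)\<bar> * indicator {-pi..pi} s \<partial>lborel))"
        by (intro mult_left_mono nn_transl[OF Gm Gper th]) auto
      also have "(\<integral>\<^sup>+s. ennreal \<bar>v (cis s)\<bar> * indicator {-pi..pi} s \<partial>lborel) = (\<integral>\<^sup>+s. U n s \<partial>lborel)"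
        unfolding U_def vL ..
      also have "ennreal (2/D) * (3 * (\<integral>\<^sup>+s. U n s \<partial>lborel)) = ennreal (6 * a / D)"
      proof -
        have "ennreal (6 * a / D) = ennreal ((2/D) * (3 * a))" by (simp add: field_simps)
        also have "\<dots> = ennreal (2/D) * ennreal (3 * a)" using D0 a0 by (intro ennreal_mult) auto
        also have "ennreal (3 * a) = 3 * ennreal a" using a0 by (simp add: ennreal_mult)
        finally show ?thesis unfolding Aeq by simp
      qed
      finally have le: "(\<integral>\<^sup>+t. ennreal \<bar>g t\<bar> \<partial>lborel) \<le> ennreal (6 * a / D)" .
      have "enn2real (\<integral>\<^sup>+t. ennreal \<bar>g t\<bar> \<partial>lborel) \<le> enn2real (ennreal (6 * a / D))"
        by (rule enn2real_mono[OF le]) simp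
      then show ?thesis using D0 a0 by simp
    qed
    finally have I: "\<bar>LINT t:S D|lborel. f t\<bar> \<le> 6 * a / D" .
    have "\<bar>conj_fun v \<theta>\<bar> = (1/(2*pi)) * \<bar>LINT t:S D|lborel. f t\<bar>"
      unfolding cf by (simp add: abs_mult)
    also have "\<dots> \<le> (1/(2*pi)) * (6 * a / D)"
      using I by (intro mult_left_mono) auto
    also have "\<dots> = M" unfolding M_def by (simp add: field_simps)
    finally show ?thesis .
  qed
  obtain K where K: "\<And>x. x \<in> w ` sphere 0 1 \<Longrightarrow> norm x \<le> K"
    using bnd unfolding bounded_iff by blast
  have wK: "w (cis s) \<le> K" for s using K[of "w (cis s)"] by auto
  have K0: "K > 0" using wK[of 0] posc[of 0] by linarith
  have uv: "u (cis s) + v (cis s) = L s" for s unfolding uL vL by (auto simp: min_def max_def)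
  show ?thesis
    unfolding apical_HS_weight_def
  proof (rule conjI[OF bnd], rule conjI[OF pos], rule exI[of _ u], rule exI[of _ v], intro conjI)
    show "(\<lambda>\<theta>. u (cis \<theta>)) \<in> borel_measurable circle_measure"
      unfolding uL by (intro borel_measurable_max Lmc borel_measurable_const)
    show "\<exists>B. AE \<theta> in circle_measure. \<bar>u (cis \<theta>)\<bar> \<le> B"
    proof (intro exI[of _ "\<bar>ln K\<bar> + real n"] AE_I2)
      fix s
      have "L s \<le> ln K" unfolding L_def using wK[of s] posc[of s] K0 by simp
      then show "\<bar>u (cis s)\<bar> \<le> \<bar>ln K\<bar> + real n" unfolding uL by (auto simp: max_def)
    qed
    have vm: "(\<lambda>\<theta>. v (cis \<theta>)) \<in> borel_measurable circle_measure"
      unfolding vL by (intro borel_measurable_min borel_measurable_add Lmc borel_measurable_const)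
    have vb: "AE x in circle_measure. norm (v (cis x)) \<le> norm (ln (w (cis x)))"
    proof (intro AE_I2)
      fix x
      show "norm (v (cis x)) \<le> norm (ln (w (cis x)))"
        using vL[of x] unfolding L_def by (cases "ln (w (cis x)) + real n < 0") auto
    qed
    show "integrable circle_measure (\<lambda>\<theta>. v (cis \<theta>))"
      by (rule Bochner_Integration.integrable_bound[OF intL vm vb])
    show "AE \<theta> in circle_measure. w (cis \<theta>) = exp (u (cis \<theta>) + v (cis \<theta>))"
      by (intro AE_I2) (simp add: uv L_def posc)
    show "\<exists>M<pi / 2. AE \<theta> in circle_measure. cis \<theta> \<in> Lplus w \<delta> \<longrightarrow> \<bar>conj_fun v \<theta>\<bar> \<le> M"
      using M_lt conjb by (intro exI[of _ M] conjI AE_I2) (auto simp: space_circle)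
  qed
qed

end
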